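(* Let $V$ be a finite set and let $A$ be a real symmetric matrix indexed by $V$. Consider the statements: (i) $A$ has a perfect elimination ordering; (ii) $A$ has no weighted chordless cycle; (iii) every level graph of $A$ is chordal. Then (i) implies (ii), and (ii) implies (iii).
   Context: A perfect elimination ordering of $A$ is a linear order $\pi$ of $V$ with $A_{yz}\ge\min\{A_{xy},A_{xz}\}$ for all $x<_\pi y<_\pi z$. A walk $W=(v_0,\dots,v_p)$ of elements of $V$ is weighted chordless in $A$ if $A_{v_{i-1}v_{i+1}}<\min\{A_{v_{i-1}v_i},A_{v_{i+1}v_i}\}$ for $1\le i\le p-1$; it is a weighted chordless cycle if in addition $v_0=v_p$, the elements $v_0,\dots,v_{p-1}$ are distinct, and $A_{v_{p-1}v_1}<\min\{A_{v_{p-1}v_0},A_{v_0v_1}\}$. If $\alpha_0<\dots<\alpha_L$ are the distinct values of the entries of $A$, the level graph $G_\ell$ is the graph on $V$ with edges the pairs $\{x,y\}$ with $A_{xy}\ge\alpha_\ell$. A graph is chordal if it contains no chordless (induced) cycle of length at least 4. *)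

theory Defs
  imports Complex_Main
begin

text \<open>A matrix indexed by V is a function A :: 'a => 'a => real, considered on V x V.
A linear order of V is represented by a list ps with distinct ps and set ps = V;
x <_pi y iff x occurs at a smaller position than y.\<close>

definition symmetric_matrix_on :: "'a set \<Rightarrow> ('a \<Rightarrow> 'a \<Rightarrow> real) \<Rightarrow> bool" where
  "symmetric_matrix_on V A \<longleftrightarrow> (\<forall>x\<in>V. \<forall>y\<in>V. A x y = A y x)"

definition is_peo :: "'a set \<Rightarrow> ('a \<Rightarrow> 'a \<Rightarrow> real) \<Rightarrow> 'a list \<Rightarrow> bool" where
  "is_peo V A ps \<longleftrightarrow> distinct ps \<and> set ps = V \<and>
     (\<forall>i j k. i < j \<and> j < k \<and> k < length ps \<longrightarrow>
        A (ps ! j) (ps ! k) \<ge> min (A (ps ! i) (ps ! j)) (A (ps ! i) (ps ! k)))"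

definition has_peo :: "'a set \<Rightarrow> ('a \<Rightarrow> 'a \<Rightarrow> real) \<Rightarrow> bool" where
  "has_peo V A \<longleftrightarrow> (\<exists>ps. is_peo V A ps)"

text \<open>A walk (v_0,...,v_p) is the list ws with length ws = p + 1.\<close>

definition weighted_chordless_walk :: "'a set \<Rightarrow> ('a \<Rightarrow> 'a \<Rightarrow> real) \<Rightarrow> 'a list \<Rightarrow> bool" where
  "weighted_chordless_walk V A ws \<longleftrightarrow> ws \<noteq> [] \<and> set ws \<subseteq> V \<and>
     (\<forall>i. 1 \<le> i \<and> i + 1 < length ws \<longrightarrow>
        A (ws ! (i - 1)) (ws ! (i + 1)) < min (A (ws ! (i - 1)) (ws ! i)) (A (ws ! (i + 1)) (ws ! i)))"

definition weighted_chordless_cycle :: "'a set \<Rightarrow> ('a \<Rightarrow> 'a \<Rightarrow> real) \<Rightarrow> 'a list \<Rightarrow> bool" where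
  "weighted_chordless_cycle V A ws \<longleftrightarrow>
     (let p = length ws - 1 in
        p \<ge> 3 \<and> length ws = p + 1 \<and> weighted_chordless_walk V A ws \<and>
        ws ! 0 = ws ! p \<and> distinct (take p ws) \<and>
        A (ws ! (p - 1)) (ws ! 1) < min (A (ws ! (p - 1)) (ws ! 0)) (A (ws ! 0) (ws ! 1)))"

definition has_weighted_chordless_cycle :: "'a set \<Rightarrow> ('a \<Rightarrow> 'a \<Rightarrow> real) \<Rightarrow> bool" where
  "has_weighted_chordless_cycle V A \<longleftrightarrow> (\<exists>ws. weighted_chordless_cycle V A ws)"

definition level_graph :: "('a \<Rightarrow> 'a \<Rightarrow> real) \<Rightarrow> real \<Rightarrow> 'a \<Rightarrow> 'a \<Rightarrow> bool" where
  "level_graph A \<alpha> x y \<longleftrightarrow> x \<noteq> y \<and> A x y \<ge> \<alpha>"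

definition chordless_cycle :: "'a set \<Rightarrow> ('a \<Rightarrow> 'a \<Rightarrow> bool) \<Rightarrow> 'a list \<Rightarrow> bool" where
  "chordless_cycle V E cs \<longleftrightarrow> (let k = length cs in
     distinct cs \<and> set cs \<subseteq> V \<and>
     (\<forall>i<k. E (cs ! i) (cs ! ((i + 1) mod k))) \<and>
     (\<forall>i<k. \<forall>j<k. i \<noteq> j \<and> j \<noteq> (i + 1) mod k \<and> i \<noteq> (j + 1) mod k \<longrightarrow>
        \<not> E (cs ! i) (cs ! j)))"

definition chordal :: "'a set \<Rightarrow> ('a \<Rightarrow> 'a \<Rightarrow> bool) \<Rightarrow> bool" where
  "chordal V E \<longleftrightarrow> \<not> (\<exists>cs. length cs \<ge> 4 \<and> chordless_cycle V E cs)"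

end

theory Submission
  imports Defs
begin

lemma part1:
  assumes sym: "symmetric_matrix_on V A" and peo: "is_peo V A ps"
    and cyc: "weighted_chordless_cycle V A ws"
  shows False
proof -
  define p where "p = length ws - 1"
  from cyc have p3: "p \<ge> 3" and len: "length ws = p+1"
    and walk: "weighted_chordless_walk V A ws" and cl: "ws!0 = ws!p"
    and dist: "distinct (take p ws)"
    and close: "A (ws!(p-1)) (ws!1) < min (A (ws!(p-1)) (ws!0)) (A (ws!0) (ws!1))"
    unfolding weighted_chordless_cycle_def p_def Let_def by auto
  from walk have setV: "set ws \<subseteq> V" and
    wk: "\<And>i. 1 \<le> i \<Longrightarrow> i + 1 < length ws \<Longrightarrow>
        A (ws ! (i - 1)) (ws ! (i + 1)) < min (A (ws ! (i - 1)) (ws ! i)) (A (ws ! (i + 1)) (ws ! i))"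
    unfolding weighted_chordless_walk_def by auto
  define c where "c = take p ws"
  have lc: "length c = p" using len by (simp add: c_def)
  have cnth: "\<And>i. i < p \<Longrightarrow> c!i = ws!i" by (simp add: c_def)
  have cV: "set c \<subseteq> V" using setV c_def by (meson set_take_subset subset_trans)
  have dc: "distinct c" using dist c_def by simp
  define pr where "pr i = (i + p - 1) mod p" for i
  define nx where "nx i = (i+1) mod p" for i
  have pr0: "pr 0 = p - 1" using p3 by (simp add: pr_def)
  have prs: "\<And>i. 0 < i \<Longrightarrow> i < p \<Longrightarrow> pr i = i - 1"
  proof -
    fix i assume "0 < i" "i < p"
    then have e: "i + p - 1 = (i - 1) + p" by simp
    have "pr i = (i - 1) mod p" unfolding pr_def e mod_add_self2 ..
    then show "pr i = i - 1" using \<open>i < p\<close> by simp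
  qed
  have nxs: "\<And>i. i + 1 < p \<Longrightarrow> nx i = i + 1" by (simp add: nx_def)
  have nxl: "nx (p - 1) = 0" using p3 by (simp add: nx_def)
  have key: "A (c!pr i) (c!nx i) < min (A (c!pr i) (c!i)) (A (c!i) (c!nx i))" if i: "i < p" for i
  proof (cases "i = 0")
    case True
    have "nx i = 1" using True p3 by (simp add: nx_def)
    then show ?thesis using close cnth True p3 pr0 by simp
  next
    case False
    have nxe: "c!(nx i) = ws!(i+1)"
    proof (cases "i + 1 < p")
      case True then show ?thesis using nxs cnth by simp
    next
      case False
      then have "i = p - 1" using i by simp
      then show ?thesis using nxl cnth cl p3 by simp
    qed
    have w: "A (ws!(i-1)) (ws!(i+1)) < min (A (ws!(i-1)) (ws!i)) (A (ws!(i+1)) (ws!i))"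
      using wk[of i] False i len by simp
    have "ws!(i+1) \<in> V" "ws!i \<in> V" using setV len i by auto
    then have "A (ws!(i+1)) (ws!i) = A (ws!i) (ws!(i+1))"
      using sym unfolding symmetric_matrix_on_def by blast
    then show ?thesis using w nxe prs[of i] False i cnth by simp
  qed
  have pr_lt: "pr i < p" for i using p3 by (simp add: pr_def)
  have nx_lt: "nx i < p" for i using p3 by (simp add: nx_def)
  have dst: "pr i \<noteq> i \<and> nx i \<noteq> i \<and> pr i \<noteq> nx i" if i: "i < p" for i
  proof (cases "i = 0")
    case True
    have "nx i = 1" using True p3 by (simp add: nx_def)
    then show ?thesis using True pr0 p3 by simp
  next
    case False
    show ?thesis
    proof (cases "i + 1 < p")
      case True then show ?thesis using nxs[of i] prs[of i] False i by auto
    next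
      case F2: False
      then have "i = p - 1" using i by simp
      then show ?thesis using nxl prs[of i] False i p3 by simp
    qed
  qed
  have psV: "set ps = V" and dps: "distinct ps" using peo unfolding is_peo_def by auto
  define pos where "pos x = (THE n. n < length ps \<and> ps ! n = x)" for x
  have posp: "pos x < length ps \<and> ps ! pos x = x" if "x \<in> set ps" for x
  proof -
    have "\<exists>!n. n < length ps \<and> ps ! n = x" using distinct_Ex1[OF dps that] .
    then show ?thesis unfolding pos_def by (rule theI')
  qed
  define f where "f j = pos (c!j)" for j
  define m where "m = Min (f ` {..<p})"
  have ne: "{..<p} \<noteq> {}"
  proof -
    have "0 \<in> {..<p}" using p3 by simp
    then show ?thesis by blast
  qed
  have "m \<in> f ` {..<p}" unfolding m_def using ne by (intro Min_in) auto
  then obtain i where i: "i < p" and fi: "f i = m" by auto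
  have fmin: "f i \<le> f j" if "j < p" for j using that fi unfolding m_def by simp
  have inps: "c!j \<in> set ps" if "j < p" for j using that cV lc psV by (metis nth_mem subsetD)
  have finj: "f j \<noteq> f j'" if "j < p" "j' < p" "j \<noteq> j'" for j j'
  proof
    assume "f j = f j'"
    then have "c!j = c!j'" using inps that posp unfolding f_def by metis
    then show False using dc that lc nth_eq_iff_index_eq by metis
  qed
  define x where "x = c!i"
  define y where "y = c!pr i"
  define z where "z = c!nx i"
  have fy: "f i < f (pr i)" using fmin[OF pr_lt[of i]] finj[OF i pr_lt[of i]] dst[OF i] by fastforce
  have fz: "f i < f (nx i)" using fmin[OF nx_lt[of i]] finj[OF i nx_lt[of i]] dst[OF i] by fastforce
  have fyz: "f (pr i) \<noteq> f (nx i)" using finj[OF pr_lt[of i] nx_lt[of i]] dst[OF i] by blast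
  have xV: "x \<in> V" and yV: "y \<in> V" and zV: "z \<in> V"
    using inps i pr_lt nx_lt psV unfolding x_def y_def z_def by auto
  have px: "ps ! f i = x" using inps[OF i] posp unfolding f_def x_def by simp
  have py: "ps ! f (pr i) = y" using inps[OF pr_lt] posp unfolding f_def y_def by simp
  have pz: "ps ! f (nx i) = z" using inps[OF nx_lt] posp unfolding f_def z_def by simp
  have ly: "f (pr i) < length ps" using inps[OF pr_lt] posp unfolding f_def by simp
  have lz: "f (nx i) < length ps" using inps[OF nx_lt] posp unfolding f_def by simp
  have P: "\<forall>a b d. a < b \<and> b < d \<and> d < length ps \<longrightarrow>
        A (ps ! b) (ps ! d) \<ge> min (A (ps ! a) (ps ! b)) (A (ps ! a) (ps ! d))"
    using peo unfolding is_peo_def by blast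
  have K: "A y z < min (A y x) (A x z)" using key[OF i] unfolding x_def y_def z_def .
  have S1: "A y x = A x y" "A z y = A y z" using sym xV yV zV unfolding symmetric_matrix_on_def by auto
  show False
  proof (cases "f (pr i) < f (nx i)")
    case True
    then have "A y z \<ge> min (A x y) (A x z)" using P fy lz px py pz by metis
    then show False using K S1 by linarith
  next
    case False
    then have "f (nx i) < f (pr i)" using fyz by simp
    then have "A z y \<ge> min (A x z) (A x y)" using P fz ly px py pz by metis
    then show False using K S1 by linarith
  qed
qed

lemma part2:
  assumes sym: "symmetric_matrix_on V A"
    and cc: "chordless_cycle V (level_graph A \<alpha>) cs" and k4: "length cs \<ge> 4"
  shows "weighted_chordless_cycle V A (cs @ [cs!0])"
proof -
  define k where "k = length cs"
  have k: "k \<ge> 4" using k4 k_def by simp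
  have dcs: "distinct cs" and csV: "set cs \<subseteq> V"
    and E: "\<And>i. i < k \<Longrightarrow> cs ! i \<noteq> cs ! ((i + 1) mod k) \<and> A (cs ! i) (cs ! ((i + 1) mod k)) \<ge> \<alpha>"
    and NE: "\<And>i j. i < k \<Longrightarrow> j < k \<Longrightarrow> i \<noteq> j \<Longrightarrow> j \<noteq> (i + 1) mod k \<Longrightarrow> i \<noteq> (j + 1) mod k
        \<Longrightarrow> \<not> (cs ! i \<noteq> cs ! j \<and> A (cs ! i) (cs ! j) \<ge> \<alpha>)"
    using cc unfolding chordless_cycle_def level_graph_def Let_def k_def by auto
  have NE': "A (cs ! i) (cs ! j) < \<alpha>" if "i < k" "j < k" "i \<noteq> j" "j \<noteq> (i + 1) mod k" "i \<noteq> (j + 1) mod k" for i j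
  proof -
    have "cs ! i \<noteq> cs ! j" using dcs that k_def nth_eq_iff_index_eq by metis
    then show ?thesis using NE[OF that] by linarith
  qed
  have symA: "A (cs!i) (cs!j) = A (cs!j) (cs!i)" if "i < k" "j < k" for i j
    using sym csV that k_def unfolding symmetric_matrix_on_def by (metis nth_mem subsetD)
  define ws where "ws = cs @ [cs!0]"
  have lw: "length ws - 1 = k" "length ws = k + 1" by (simp_all add: ws_def k_def)
  have wn: "ws ! i = cs ! i" if "i < k" for i using that by (simp add: ws_def k_def nth_append)
  have wk: "ws ! k = cs ! 0" by (simp add: ws_def k_def nth_append)
  have tk: "take k ws = cs" by (simp add: ws_def k_def)
  have cs0: "cs \<noteq> []" using k k_def by auto
  have "cs ! 0 \<in> set cs" using cs0 by simp
  then have wV: "set ws \<subseteq> V" using csV by (auto simp: ws_def)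
  have walk: "A (ws ! (i - 1)) (ws ! (i + 1)) < min (A (ws ! (i - 1)) (ws ! i)) (A (ws ! (i + 1)) (ws ! i))"
    if "1 \<le> i" "i + 1 < length ws" for i
  proof -
    have i: "i < k" using that lw by simp
    define j where "j = (i + 1) mod k"
    have wj: "ws ! (i + 1) = cs ! j"
    proof (cases "i + 1 < k")
      case True then show ?thesis using wn j_def by simp
    next
      case False then have "i + 1 = k" using i by simp
      then show ?thesis using wk j_def by simp
    qed
    have jk: "j < k" using k j_def by simp
    have jv: "j = (if i + 1 < k then i + 1 else 0)"
    proof (cases "i + 1 < k")
      case True then show ?thesis unfolding j_def by simp
    next
      case False then have "i + 1 = k" using i by simp
      then show ?thesis unfolding j_def by simp
    qed
    have e1: "(i - 1 + 1) mod k = i" using that i by simp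
    have j2: "(j + 1) mod k = (i + 2) mod k" unfolding j_def by (simp add: mod_Suc_eq)
    have c1: "A (cs ! (i - 1)) (cs ! j) < \<alpha>"
    proof (rule NE')
      show "i - 1 < k" "j < k" using i jk by auto
      show "i - 1 \<noteq> j" using i k that unfolding jv
        by (cases "i + 1 < k") auto
      show "j \<noteq> (i - 1 + 1) mod k" unfolding e1 jv using i k
        by (cases "i + 1 < k") auto
      have j2v: "(i + 2) mod k = (if i + 2 < k then i + 2 else if i + 2 = k then 0 else 1)"
      proof (cases "i + 2 < k")
        case True then show ?thesis by simp
      next
        case F: False
        show ?thesis
        proof (cases "i + 2 = k")
          case True then show ?thesis by simp
        next
          case False then have "i + 2 = k + 1" using F i by simp
          then have "(i + 2) mod k = (1 + k) mod k" by simp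
          also have "\<dots> = 1" unfolding mod_add_self2 using k by simp
          finally show ?thesis using F False by simp
        qed
      qed
      show "i - 1 \<noteq> (j + 1) mod k" unfolding j2 j2v using i k that by auto
    qed
    have c2: "A (cs ! (i - 1)) (cs ! i) \<ge> \<alpha>" using E[of "i - 1"] e1 i by simp
    have c3: "A (cs ! i) (cs ! j) \<ge> \<alpha>" using E[of i] i j_def by simp
    have "ws ! (i - 1) = cs ! (i - 1)" "ws ! i = cs ! i" using wn i by auto
    then show ?thesis using c1 c2 c3 wj symA[OF i jk] by simp
  qed
  have close: "A (cs ! (k - 1)) (cs ! 1) < \<alpha>"
  proof (rule NE')
    show "k - 1 < k" "1 < k" "k - 1 \<noteq> 1" using k by auto
    have "(k - 1 + 1) mod k = 0" using k by simp
    then show "1 \<noteq> (k - 1 + 1) mod k" by simp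
    show "k - 1 \<noteq> (1 + 1) mod k" using k by simp
  qed
  have cl2: "A (cs ! (k - 1)) (cs ! 0) \<ge> \<alpha>" using E[of "k - 1"] k by simp
  have cl3: "A (cs ! 0) (cs ! 1) \<ge> \<alpha>" using E[of 0] k by simp
  have "weighted_chordless_cycle V A ws"
    unfolding weighted_chordless_cycle_def Let_def lw(1) weighted_chordless_walk_def
    using k lw wV walk wk wn[of 0] tk dcs close cl2 cl3 wn[of "k - 1"] wn[of 1] cs0
    by (auto simp: ws_def)
  then show ?thesis by (simp add: ws_def)
qed

theorem lemma4:
  fixes V :: "'a set" and A :: "'a \<Rightarrow> 'a \<Rightarrow> real"
  assumes "finite V" and "symmetric_matrix_on V A"
  shows "(has_peo V A \<longrightarrow> \<not> has_weighted_chordless_cycle V A) \<and>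
         (\<not> has_weighted_chordless_cycle V A \<longrightarrow>
            (\<forall>\<alpha> \<in> {A x y | x y. x \<in> V \<and> y \<in> V}. chordal V (level_graph A \<alpha>)))"
proof (intro conjI impI ballI)
  assume "has_peo V A"
  then show "\<not> has_weighted_chordless_cycle V A"
    using part1[OF assms(2)] unfolding has_peo_def has_weighted_chordless_cycle_def by blast
next
  fix \<alpha> assume "\<not> has_weighted_chordless_cycle V A"
  then show "chordal V (level_graph A \<alpha>)"
    using part2[OF assms(2)] unfolding chordal_def has_weighted_chordless_cycle_def by blast
qed

end
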